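(* Let $\varphi$ be an LDL$_F$ formula over a set of Boolean variables $X\cup Y$ ($X\cap Y=\emptyset$), and let $p,q$ be fresh Boolean variables. Let $\mathcal{G}_\varphi$ be the four-player iterated Boolean game with QPLDL$_F$ goals over $X\cup Y\cup\{p,q\}$ where Player 1 controls $X$ with goal $\gamma_1=\exists\varphi$; Player 2 controls $Y$ with goal $\gamma_2=\forall\neg\varphi$; Player 3 controls $p$ with goal $\gamma_3=\exists\varphi\vee(p\leftrightarrow q)$; Player 4 controls $q$ with goal $\gamma_4=\exists\varphi\vee\neg(p\leftrightarrow q)$. Then the synthesis problem for $\varphi$ in which the system controls $X$ and the environment controls $Y$ has a positive answer if and only if $\mathcal{G}_\varphi$ has a Nash equilibrium.
   Context: LDL$_F$ formulas over a finite set $\Phi$ of Boolean variables: $\varphi ::= p \mid \neg\varphi \mid \varphi\wedge\varphi \mid \varphi\vee\varphi \mid \langle\rho\rangle\varphi \mid [\rho]\varphi$, $\rho ::= \psi \mid \varphi? \mid \rho+\rho \mid \rho;\rho \mid \rho^*$ ($\psi$ propositional), with standard semantics over finite traces. For $\pi^\infty\in(2^\Phi)^\omega$: $\pi^\infty\models\exists\psi$ iff some finite prefix of $\pi^\infty$ satisfies $\psi$; $\pi^\infty\models\forall\psi$ iff every finite prefix satisfies $\psi$. In $\gamma_3,\gamma_4$ the disjunct $p\leftrightarrow q$ (resp. $\neg(p\leftrightarrow q)$) is evaluated on the play as an LDL$_F$ formula, i.e. it holds iff it holds in the first valuation of the play. Iterated Boolean game: players $N=\{1,\dots,n\}$, each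 controlling a part $\Phi_i$ of a partition of $\Phi$; strategies are finite state machines $\sigma_i=(S_i,s_i^0,\delta_i:S_i\times2^\Phi\to S_i,\tau_i:S_i\to2^{\Phi_i})$; a profile generates the play $\pi^\infty(\vec\sigma)=v_0v_1\cdots$, $v_t=\bigcup_i\tau_i(s_i^t)$, $s_i^{t+1}=\delta_i(s_i^t,v_t)$; $\vec\sigma$ is a Nash equilibrium if no player $i$ has a strategy $\sigma'_i$ with $\pi^\infty(\vec\sigma_{-i},\sigma'_i)\models\gamma_i$ and $\pi^\infty(\vec\sigma)\not\models\gamma_i$. The synthesis problem for $\varphi$ (system controls $X$, environment controls $Y$, both choosing their valuations simultaneously at each round) has a positive answer iff there is a finite-state strategy of the system (controlling $X$) such that for every finite-state strategy of the environment (controlling $Y$) the resulting infinite play has a finite prefix satisfying $\varphi$. *)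

theory Defs
  imports Main
begin

datatype 'v pl = PVar 'v | PNot "'v pl" | PAnd "'v pl" "'v pl" | POr "'v pl" "'v pl"

datatype 'v ldl =
    Prop 'v | Neg "'v ldl" | And "'v ldl" "'v ldl" | Or "'v ldl" "'v ldl"
  | Diam "'v re" "'v ldl" | Box "'v re" "'v ldl"
and 'v re =
    Base "'v pl" | Test "'v ldl" | Plus "'v re" "'v re" | Seq "'v re" "'v re" | Star "'v re"

fun pl_sat :: "'v set \<Rightarrow> 'v pl \<Rightarrow> bool" where
  "pl_sat v (PVar x) = (x \<in> v)"
| "pl_sat v (PNot a) = (\<not> pl_sat v a)"
| "pl_sat v (PAnd a b) = (pl_sat v a \<and> pl_sat v b)"
| "pl_sat v (POr a b) = (pl_sat v a \<or> pl_sat v b)"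

fun pl_atoms :: "'v pl \<Rightarrow> 'v set" where
  "pl_atoms (PVar x) = {x}"
| "pl_atoms (PNot a) = pl_atoms a"
| "pl_atoms (PAnd a b) = pl_atoms a \<union> pl_atoms b"
| "pl_atoms (POr a b) = pl_atoms a \<union> pl_atoms b"

fun atoms :: "'v ldl \<Rightarrow> 'v set" and re_atoms :: "'v re \<Rightarrow> 'v set" where
  "atoms (Prop x) = {x}"
| "atoms (Neg a) = atoms a"
| "atoms (And a b) = atoms a \<union> atoms b"
| "atoms (Or a b) = atoms a \<union> atoms b"
| "atoms (Diam r a) = re_atoms r \<union> atoms a"
| "atoms (Box r a) = re_atoms r \<union> atoms a"
| "re_atoms (Base a) = pl_atoms a"
| "re_atoms (Test a) = atoms a"
| "re_atoms (Plus r s) = re_atoms r \<union> re_atoms s"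
| "re_atoms (Seq r s) = re_atoms r \<union> re_atoms s"
| "re_atoms (Star r) = re_atoms r"

fun sat :: "'v set list \<Rightarrow> nat \<Rightarrow> 'v ldl \<Rightarrow> bool"
and rel :: "'v set list \<Rightarrow> 'v re \<Rightarrow> (nat \<times> nat) set" where
  "sat tr i (Prop x) = (i < length tr \<and> x \<in> tr ! i)"
| "sat tr i (Neg a) = (\<not> sat tr i a)"
| "sat tr i (And a b) = (sat tr i a \<and> sat tr i b)"
| "sat tr i (Or a b) = (sat tr i a \<or> sat tr i b)"
| "sat tr i (Diam r a) = (\<exists>j. (i, j) \<in> rel tr r \<and> j < length tr \<and> sat tr j a)"
| "sat tr i (Box r a) = (\<forall>j. (i, j) \<in> rel tr r \<and> j < length tr \<longrightarrow> sat tr j a)"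
| "rel tr (Base b) = {(i, Suc i) | i. Suc i < length tr \<and> pl_sat (tr ! i) b}"
| "rel tr (Test a) = {(i, i) | i. i < length tr \<and> sat tr i a}"
| "rel tr (Plus r s) = rel tr r \<union> rel tr s"
| "rel tr (Seq r s) = rel tr r O rel tr s"
| "rel tr (Star r) = (rel tr r)\<^sup>*"

definition trace_sat :: "'v set list \<Rightarrow> 'v ldl \<Rightarrow> bool" where
  "trace_sat tr a = sat tr 0 a"

definition prefix_of :: "(nat \<Rightarrow> 'v set) \<Rightarrow> nat \<Rightarrow> 'v set list" where
  "prefix_of pi k = map pi [0..<Suc k]"

definition ex_sat :: "'v ldl \<Rightarrow> (nat \<Rightarrow> 'v set) \<Rightarrow> bool" where
  "ex_sat a pi = (\<exists>k. trace_sat (prefix_of pi k) a)"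

definition all_sat :: "'v ldl \<Rightarrow> (nat \<Rightarrow> 'v set) \<Rightarrow> bool" where
  "all_sat a pi = (\<forall>k. trace_sat (prefix_of pi k) a)"

text \<open>Plain LDL_F formula evaluated on a play: it holds in the first valuation.\<close>
definition first_sat :: "'v ldl \<Rightarrow> (nat \<Rightarrow> 'v set) \<Rightarrow> bool" where
  "first_sat a pi = trace_sat [pi 0] a"

definition iff_f :: "'v ldl \<Rightarrow> 'v ldl \<Rightarrow> 'v ldl" where
  "iff_f a b = Or (And a b) (And (Neg a) (Neg b))"

section \<open>Finite state machine strategies (states drawn from nat, WLOG)\<close>

record 'v strat =
  St :: "nat set"
  init :: nat
  delta :: "nat \<Rightarrow> 'v set \<Rightarrow> nat"
  out :: "nat \<Rightarrow> 'v set"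

definition valid_strat :: "'v set \<Rightarrow> 'v set \<Rightarrow> 'v strat \<Rightarrow> bool" where
  "valid_strat Phi Phii s =
     (finite (St s) \<and> init s \<in> St s
      \<and> (\<forall>x \<in> St s. \<forall>v. v \<subseteq> Phi \<longrightarrow> delta s x v \<in> St s)
      \<and> (\<forall>x \<in> St s. out s x \<subseteq> Phii))"

fun states :: "'p set \<Rightarrow> ('p \<Rightarrow> 'v strat) \<Rightarrow> nat \<Rightarrow> 'p \<Rightarrow> nat" where
  "states N sg 0 = (\<lambda>i. init (sg i))"
| "states N sg (Suc t) =
     (let v = (\<Union>j\<in>N. out (sg j) (states N sg t j))
      in (\<lambda>i. delta (sg i) (states N sg t i) v))"

definition play :: "'p set \<Rightarrow> ('p \<Rightarrow> 'v strat) \<Rightarrow> nat \<Rightarrow> 'v set" where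
  "play N sg t = (\<Union>j\<in>N. out (sg j) (states N sg t j))"

definition is_NE :: "'p set \<Rightarrow> ('p \<Rightarrow> 'v set) \<Rightarrow> ('p \<Rightarrow> (nat \<Rightarrow> 'v set) \<Rightarrow> bool)
                     \<Rightarrow> ('p \<Rightarrow> 'v strat) \<Rightarrow> bool" where
  "is_NE N ctrl goal sg =
     ((\<forall>i\<in>N. valid_strat (\<Union>(ctrl ` N)) (ctrl i) (sg i))
      \<and> (\<forall>i\<in>N. \<forall>s'. valid_strat (\<Union>(ctrl ` N)) (ctrl i) s'
            \<longrightarrow> goal i (play N (sg(i := s'))) \<longrightarrow> goal i (play N sg)))"

definition G_players :: "nat set" where "G_players = {1, 2, 3, 4}"

definition G_ctrl :: "'v set \<Rightarrow> 'v set \<Rightarrow> 'v \<Rightarrow> 'v \<Rightarrow> nat \<Rightarrow> 'v set" where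
  "G_ctrl X Y p q i = (if i = 1 then X else if i = 2 then Y else if i = 3 then {p}
                       else if i = 4 then {q} else {})"

definition G_goal :: "'v ldl \<Rightarrow> 'v \<Rightarrow> 'v \<Rightarrow> nat \<Rightarrow> (nat \<Rightarrow> 'v set) \<Rightarrow> bool" where
  "G_goal phi p q i pi =
     (if i = 1 then ex_sat phi pi
      else if i = 2 then all_sat (Neg phi) pi
      else if i = 3 then ex_sat phi pi \<or> first_sat (iff_f (Prop p) (Prop q)) pi
      else if i = 4 then ex_sat phi pi \<or> first_sat (Neg (iff_f (Prop p) (Prop q))) pi
      else False)"

definition synth :: "'v set \<Rightarrow> 'v set \<Rightarrow> 'v ldl \<Rightarrow> bool" where
  "synth X Y phi =
     (\<exists>sx. valid_strat (X \<union> Y) X sx \<and>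
        (\<forall>sy. valid_strat (X \<union> Y) Y sy \<longrightarrow>
           ex_sat phi (play {1::nat, 2} (\<lambda>i. if i = 1 then sx else sy))))"

end

theory Submission
  imports Defs "HOL-Library.Nat_Bijection"
begin

lemma states_Suc: "states N sg (Suc t) i = delta (sg i) (states N sg t i) (play N sg t)"
  by (simp add: play_def Let_def)

declare states.simps(2) [simp del]

lemma states_inv:
  assumes "\<forall>i\<in>N. valid_strat (\<Union>(C ` N)) (C i) (sg i)"
  shows "\<forall>i\<in>N. states N sg t i \<in> St (sg i)"
proof (induct t)
  case 0
  then show ?case using assms by (simp add: valid_strat_def)
next
  case (Suc t)
  have "out (sg j) (states N sg t j) \<subseteq> \<Union>(C ` N)" if j: "j \<in> N" for j
  proof -
    have "states N sg t j \<in> St (sg j)" using Suc j by blast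
    moreover have "\<forall>x \<in> St (sg j). out (sg j) x \<subseteq> C j" using assms j unfolding valid_strat_def by blast
    ultimately show ?thesis using j by blast
  qed
  then have pl: "play N sg t \<subseteq> \<Union>(C ` N)" unfolding play_def by (rule UN_least)
  show ?case
  proof
    fix i assume i: "i \<in> N"
    have "states N sg t i \<in> St (sg i)" using Suc i by blast
    moreover have "\<forall>x \<in> St (sg i). \<forall>v. v \<subseteq> \<Union>(C ` N) \<longrightarrow> delta (sg i) x v \<in> St (sg i)"
      using assms i unfolding valid_strat_def by blast
    ultimately show "states N sg (Suc t) i \<in> St (sg i)" using pl by (simp add: states_Suc)
  qed
qed

lemma out_inv:
  assumes "\<forall>i\<in>N. valid_strat (\<Union>(C ` N)) (C i) (sg i)" "i \<in> N"
  shows "out (sg i) (states N sg t i) \<subseteq> C i"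
  using states_inv[OF assms(1)] assms unfolding valid_strat_def by blast

lemma pl_inv: "pl_atoms b \<subseteq> A \<Longrightarrow> v \<inter> A = w \<inter> A \<Longrightarrow> pl_sat v b = pl_sat w b"
  by (induct b) auto

lemma sat_inv:
  assumes len: "length tr' = length tr" and eq: "\<forall>j<length tr. tr!j \<inter> A = tr'!j \<inter> A"
  shows "atoms a \<subseteq> A \<Longrightarrow> (\<forall>i. sat tr' i a = sat tr i a)"
    and "re_atoms r \<subseteq> A \<Longrightarrow> rel tr' r = rel tr r"
proof (induct a and r)
  case (Prop x)
  then show ?case using len eq by auto
next
  case (Neg a)
  then show ?case by simp
next
  case (And a b)
  then show ?case by simp
next
  case (Or a b)
  then show ?case by simp
next
  case (Diam r a)
  then have "rel tr' r = rel tr r" "\<forall>i. sat tr' i a = sat tr i a" by simp_all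
  then show ?case using len by simp
next
  case (Box r a)
  then have "rel tr' r = rel tr r" "\<forall>i. sat tr' i a = sat tr i a" by simp_all
  then show ?case using len by simp
next
  case (Base b)
  have "pl_sat (tr' ! i) b = pl_sat (tr ! i) b" if "i < length tr" for i
  proof (rule pl_inv[of b A])
    show "pl_atoms b \<subseteq> A" using Base by simp
    show "tr' ! i \<inter> A = tr ! i \<inter> A" using eq that by simp
  qed
  then show ?case using len by auto
next
  case (Test a)
  then have "\<forall>i. sat tr' i a = sat tr i a" by simp
  then show ?case using len by simp
next
  case (Plus r s)
  then show ?case by simp
next
  case (Seq r s)
  then show ?case by simp
next
  case (Star r)
  then show ?case by simp
qed

lemma empty_valid: "valid_strat Phi C \<lparr>St = {0}, init = 0, delta = \<lambda>_ _. 0, out = \<lambda>_. {}\<rparr>"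
  by (simp add: valid_strat_def)

lemma play4: "play G_players sg t = out (sg 1) (states G_players sg t 1) \<union> out (sg 2) (states G_players sg t 2)
   \<union> out (sg 3) (states G_players sg t 3) \<union> out (sg 4) (states G_players sg t 4)"
  by (auto simp: play_def G_players_def)

lemma play2: "play {1::nat,2} sg t = out (sg 1) (states {1,2} sg t 1) \<union> out (sg 2) (states {1,2} sg t 2)"
  by (auto simp: play_def)

lemma ex_all: "ex_sat a pi \<Longrightarrow> \<not> all_sat (Neg a) pi"
  by (auto simp: ex_sat_def all_sat_def trace_sat_def)

lemma first_iff: "first_sat (iff_f (Prop p) (Prop q)) pi = (p \<in> pi 0 \<longleftrightarrow> q \<in> pi 0)"
  by (auto simp: first_sat_def trace_sat_def iff_f_def)

lemma first_niff: "first_sat (Neg (iff_f (Prop p) (Prop q))) pi = (\<not> (p \<in> pi 0 \<longleftrightarrow> q \<in> pi 0))"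
  by (auto simp: first_sat_def trace_sat_def iff_f_def)

lemma PhiE: "\<Union>(G_ctrl X Y p q ` G_players) = X \<union> Y \<union> {p, q}"
  by (auto simp: G_ctrl_def G_players_def)

lemma Phi2: "\<Union>((\<lambda>i::nat. if i = 1 then X else Y) ` {1,2}) = X \<union> Y"
  by auto

lemma valid_mono: "valid_strat Phi C s \<Longrightarrow> Phi' \<subseteq> Phi \<Longrightarrow> valid_strat Phi' C s"
  unfolding valid_strat_def by blast

lemma play_sat:
  assumes "atoms phi \<subseteq> A" "\<And>t. pi' t \<inter> A = pi t \<inter> A"
  shows "ex_sat phi pi' = ex_sat phi pi"
proof -
  have "\<And>k. sat (prefix_of pi' k) 0 phi = sat (prefix_of pi k) 0 phi"
  proof -
    fix k
    show "sat (prefix_of pi' k) 0 phi = sat (prefix_of pi k) 0 phi"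
      using sat_inv(1)[of "prefix_of pi' k" "prefix_of pi k" A phi] assms
      by (simp add: prefix_of_def nth_append del: upt_Suc)
  qed
  then show ?thesis by (simp add: ex_sat_def trace_sat_def)
qed

lemma fwd:
  fixes X Y :: "'v set" and p q :: 'v and phi :: "'v ldl"
  assumes "p \<notin> X \<union> Y" and "q \<notin> X \<union> Y"
    and syn: "synth X Y phi"
  shows "\<exists>sg. is_NE G_players (G_ctrl X Y p q) (G_goal phi p q) sg"
proof -
  obtain sx where sx: "valid_strat (X \<union> Y) X sx" and
    win: "\<And>sy. valid_strat (X \<union> Y) Y sy \<Longrightarrow>
           ex_sat phi (play {1::nat, 2} (\<lambda>i. if i = 1 then sx else sy))"
    using syn unfolding synth_def by blast
  define z :: "'v strat" where "z = \<lparr>St = {0}, init = 0, delta = \<lambda>_ _. 0, out = \<lambda>_. {}\<rparr>"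
  define sx' where "sx' = sx\<lparr>delta := \<lambda>s v. delta sx s (v \<inter> (X \<union> Y))\<rparr>"
  define sg where "sg = (\<lambda>i::nat. if i = 1 then sx' else z)"
  have zv: "\<And>Phi C. valid_strat Phi C z" unfolding z_def by (rule empty_valid)
  have sx'v: "valid_strat (X \<union> Y \<union> {p, q}) X sx'"
    using sx unfolding valid_strat_def sx'_def by auto
  have key: "ex_sat phi (play G_players (sg(2:=s')))"
    if s': "valid_strat (X \<union> Y \<union> {p, q}) Y s'" for s'
  proof -
    define sg4 where "sg4 = sg(2:=s')"
    define sg2 where "sg2 = (\<lambda>i::nat. if i = 1 then sx else s')"
    have s'2: "valid_strat (X \<union> Y) Y s'" using s' valid_mono by blast
    have v2: "\<forall>i\<in>{1::nat,2}. valid_strat (\<Union>((\<lambda>i::nat. if i = 1 then X else Y) ` {1,2}))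
        ((\<lambda>i::nat. if i = 1 then X else Y) i) (sg2 i)"
      unfolding Phi2 sg2_def using sx s'2 by auto
    have o1: "out (sg2 1) (states {1,2} sg2 t 1) \<subseteq> X" for t
      using out_inv[OF v2, of 1 t] by simp
    have o2: "out (sg2 2) (states {1,2} sg2 t 2) \<subseteq> Y" for t
      using out_inv[OF v2, of 2 t] by simp
    have f4: "sg4 1 = sx'" "sg4 2 = s'" "sg4 3 = z" "sg4 4 = z" "sg2 1 = sx" "sg2 2 = s'" "sg4 (Suc 0) = sx'" "sg2 (Suc 0) = sx"
      by (simp_all add: sg4_def sg2_def sg_def)
    have claim: "states G_players sg4 t 1 = states {1,2} sg2 t 1 \<and>
        states G_players sg4 t 2 = states {1,2} sg2 t 2 \<and>
        states G_players sg4 t 3 = 0 \<and> states G_players sg4 t 4 = 0" for t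
    proof (induct t)
      case 0
      then show ?case by (simp add: f4 sx'_def z_def)
    next
      case (Suc t)
      have pe: "play G_players sg4 t = play {1,2} sg2 t"
        using Suc unfolding play4 play2 by (simp add: f4 sx'_def z_def)
      have "play {1,2} sg2 t \<subseteq> X \<union> Y" using o1 o2 unfolding play2 by blast
      then have "play {1,2} sg2 t \<inter> (X \<union> Y) = play {1,2} sg2 t" by blast
      then show ?case using Suc pe
        by (simp add: states_Suc f4 sx'_def z_def)
    qed
    have "play G_players sg4 = play {1,2} sg2"
    proof
      fix t show "play G_players sg4 t = play {1,2} sg2 t"
        using claim[of t] unfolding play4 play2 by (simp add: f4 sx'_def z_def)
    qed
    then show ?thesis using win[OF s'2] unfolding sg4_def sg2_def by simp
  qed
  have sgz: "sg(2:=z) = sg" unfolding sg_def by auto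
  have ex: "ex_sat phi (play G_players sg)" using key[of z] zv sgz by simp
  have "is_NE G_players (G_ctrl X Y p q) (G_goal phi p q) sg"
    unfolding is_NE_def PhiE
  proof (intro conjI ballI allI impI)
    fix i assume "i \<in> G_players"
    then show "valid_strat (X \<union> Y \<union> {p, q}) (G_ctrl X Y p q i) (sg i)"
      using sx'v zv by (auto simp: G_players_def G_ctrl_def sg_def)
  next
    fix i s' assume i: "i \<in> G_players" and s': "valid_strat (X \<union> Y \<union> {p, q}) (G_ctrl X Y p q i) s'"
      and g: "G_goal phi p q i (play G_players (sg(i := s')))"
    show "G_goal phi p q i (play G_players sg)"
    proof (cases "i = 2")
      case True
      have "valid_strat (X \<union> Y \<union> {p, q}) Y s'" using s' True by (simp add: G_ctrl_def)
      then have "ex_sat phi (play G_players (sg(i := s')))" using key[of s'] True by simp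
      then have "\<not> all_sat (Neg phi) (play G_players (sg(i := s')))" by (rule ex_all)
      then show ?thesis using g True unfolding G_goal_def by simp
    next
      case False
      then have "i = 1 \<or> i = 3 \<or> i = 4" using i by (auto simp: G_players_def)
      then show ?thesis using ex unfolding G_goal_def by (elim disjE) simp_all
    qed
  qed
  then show ?thesis by blast
qed


definition enc3 :: "nat \<times> nat \<times> nat \<Rightarrow> nat" where
  "enc3 x = prod_encode (fst x, prod_encode (snd x))"
definition dec3 :: "nat \<Rightarrow> nat \<times> nat \<times> nat" where
  "dec3 n = (fst (prod_decode n), prod_decode (snd (prod_decode n)))"
lemma dec3_enc3 [simp]: "dec3 (enc3 x) = x"
  by (simp add: enc3_def dec3_def)

lemma step_A:
  fixes X Y :: "'v set" and p q :: 'v and phi :: "'v ldl"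
  assumes "p \<notin> X \<union> Y" and "q \<notin> X \<union> Y" and "p \<noteq> q"
    and ne: "is_NE G_players (G_ctrl X Y p q) (G_goal phi p q) sg"
  shows "ex_sat phi (play G_players sg)"
proof (rule ccontr)
  assume nex: "\<not> ex_sat phi (play G_players sg)"
  have V: "\<forall>i\<in>G_players. valid_strat (\<Union>(G_ctrl X Y p q ` G_players)) (G_ctrl X Y p q i) (sg i)"
    using ne unfolding is_NE_def by blast
  have dev: "\<And>i s'. i \<in> G_players \<Longrightarrow> valid_strat (X \<union> Y \<union> {p, q}) (G_ctrl X Y p q i) s'
            \<Longrightarrow> G_goal phi p q i (play G_players (sg(i := s'))) \<Longrightarrow> G_goal phi p q i (play G_players sg)"
    using ne unfolding is_NE_def PhiE by blast
  have o: "out (sg i) (init (sg i)) \<subseteq> G_ctrl X Y p q i" if "i \<in> G_players" for i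
    using out_inv[OF V that, of 0] by simp
  have o1: "out (sg 1) (init (sg 1)) \<subseteq> X" using o[of 1] by (simp add: G_players_def G_ctrl_def)
  have o2: "out (sg 2) (init (sg 2)) \<subseteq> Y" using o[of 2] by (simp add: G_players_def G_ctrl_def)
  have o3: "out (sg 3) (init (sg 3)) \<subseteq> {p}" using o[of 3] by (simp add: G_players_def G_ctrl_def)
  have o4: "out (sg 4) (init (sg 4)) \<subseteq> {q}" using o[of 4] by (simp add: G_players_def G_ctrl_def)
  define P0 where "P0 = play G_players sg 0"
  have P0: "P0 = out (sg 1) (init (sg 1)) \<union> out (sg 2) (init (sg 2)) \<union> out (sg 3) (init (sg 3)) \<union> out (sg 4) (init (sg 4))"
    unfolding P0_def play4 by simp
  define s3 :: "'v strat" where "s3 = \<lparr>St = {0}, init = 0, delta = \<lambda>_ _. 0, out = \<lambda>_. if q \<in> P0 then {p} else {}\<rparr>"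
  define s4 :: "'v strat" where "s4 = \<lparr>St = {0}, init = 0, delta = \<lambda>_ _. 0, out = \<lambda>_. if p \<in> P0 then {} else {q}\<rparr>"
  have v3: "valid_strat (X \<union> Y \<union> {p, q}) (G_ctrl X Y p q 3) s3"
    by (simp add: s3_def valid_strat_def G_ctrl_def)
  have v4: "valid_strat (X \<union> Y \<union> {p, q}) (G_ctrl X Y p q 4) s4"
    by (simp add: s4_def valid_strat_def G_ctrl_def)
  have Q3: "play G_players (sg(3 := s3)) 0 = out (sg 1) (init (sg 1)) \<union> out (sg 2) (init (sg 2)) \<union> (if q \<in> P0 then {p} else {}) \<union> out (sg 4) (init (sg 4))"
    unfolding play4 by (simp add: s3_def)
  have Q4: "play G_players (sg(4 := s4)) 0 = out (sg 1) (init (sg 1)) \<union> out (sg 2) (init (sg 2)) \<union> out (sg 3) (init (sg 3)) \<union> (if p \<in> P0 then {} else {q})"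
    unfolding play4 by (simp add: s4_def)
  have "first_sat (iff_f (Prop p) (Prop q)) (play G_players (sg(3 := s3)))"
    unfolding first_iff Q3 using o1 o2 o3 o4 assms(1-3) P0 by auto
  then have g3: "G_goal phi p q 3 (play G_players sg)"
    using dev[of 3 s3] v3 by (simp add: G_goal_def G_players_def)
  have "first_sat (Neg (iff_f (Prop p) (Prop q))) (play G_players (sg(4 := s4)))"
    unfolding first_niff Q4 using o1 o2 o3 o4 assms(1-3) P0 by auto
  then have g4: "G_goal phi p q 4 (play G_players sg)"
    using dev[of 4 s4] v4 by (simp add: G_goal_def G_players_def)
  show False using g3 g4 nex unfolding G_goal_def first_iff first_niff by simp
qed


lemma vs_delta: "valid_strat Phi C s \<Longrightarrow> x \<in> St s \<Longrightarrow> v \<subseteq> Phi \<Longrightarrow> delta s x v \<in> St s"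
  unfolding valid_strat_def by blast

lemma vs_out: "valid_strat Phi C s \<Longrightarrow> x \<in> St s \<Longrightarrow> out s x \<subseteq> C"
  unfolding valid_strat_def by blast

lemma nex_all: "\<not> ex_sat a pi \<Longrightarrow> all_sat (Neg a) pi"
  by (auto simp: ex_sat_def all_sat_def trace_sat_def)

lemma bwd:
  fixes X Y :: "'v set" and p q :: 'v and phi :: "'v ldl"
  assumes pXY: "p \<notin> X \<union> Y" and qXY: "q \<notin> X \<union> Y" and pq: "p \<noteq> q"
    and at: "atoms phi \<subseteq> X \<union> Y"
    and ne: "is_NE G_players (G_ctrl X Y p q) (G_goal phi p q) sg"
  shows "synth X Y phi"
proof (rule ccontr)
  assume ns: "\<not> synth X Y phi"
  have exA: "ex_sat phi (play G_players sg)" using step_A[OF pXY qXY pq ne] .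
  have V: "\<forall>i\<in>G_players. valid_strat (X \<union> Y \<union> {p, q}) (G_ctrl X Y p q i) (sg i)"
    using ne unfolding is_NE_def PhiE by blast
  have dev: "\<And>i s'. i \<in> G_players \<Longrightarrow> valid_strat (X \<union> Y \<union> {p, q}) (G_ctrl X Y p q i) s'
            \<Longrightarrow> G_goal phi p q i (play G_players (sg(i := s'))) \<Longrightarrow> G_goal phi p q i (play G_players sg)"
    using ne unfolding is_NE_def PhiE by blast
  define s1 where "s1 = sg 1"
  define s3 where "s3 = sg 3"
  define s4 where "s4 = sg 4"
  have v1: "valid_strat (X \<union> Y \<union> {p, q}) X s1" using V unfolding s1_def by (simp add: G_players_def G_ctrl_def)
  have v3: "valid_strat (X \<union> Y \<union> {p, q}) {p} s3" using V unfolding s3_def by (simp add: G_players_def G_ctrl_def)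
  have v4: "valid_strat (X \<union> Y \<union> {p, q}) {q} s4" using V unfolding s4_def by (simp add: G_players_def G_ctrl_def)
  define W where "W n v = v \<union> out s3 (fst (snd (dec3 n))) \<union> out s4 (snd (snd (dec3 n)))" for n v
  define sx :: "'v strat" where "sx = \<lparr>St = enc3 ` (St s1 \<times> St s3 \<times> St s4),
      init = enc3 (init s1, init s3, init s4),
      delta = \<lambda>n v. enc3 (delta s1 (fst (dec3 n)) (W n v), delta s3 (fst (snd (dec3 n))) (W n v),
                           delta s4 (snd (snd (dec3 n))) (W n v)),
      out = \<lambda>n. out s1 (fst (dec3 n))\<rparr>"
  have sxv: "valid_strat (X \<union> Y) X sx"
    unfolding valid_strat_def
  proof (intro conjI ballI allI impI)
    show "finite (St sx)" using v1 v3 v4 by (simp add: sx_def valid_strat_def)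
    show "init sx \<in> St sx" using v1 v3 v4 by (simp add: sx_def valid_strat_def)
  next
    fix x v assume x: "x \<in> St sx" and v: "v \<subseteq> X \<union> Y"
    then obtain a b c where abc: "a \<in> St s1" "b \<in> St s3" "c \<in> St s4" "x = enc3 (a, b, c)"
      by (auto simp: sx_def)
    have b3: "out s3 b \<subseteq> {p}" "out s4 c \<subseteq> {q}" using vs_out abc v3 v4 by blast+
    have "W x v = v \<union> out s3 b \<union> out s4 c" using abc(4) by (simp add: W_def)
    then have Wv: "W x v \<subseteq> X \<union> Y \<union> {p, q}" using v b3 by blast
    have "delta s1 a (W x v) \<in> St s1" "delta s3 b (W x v) \<in> St s3" "delta s4 c (W x v) \<in> St s4"
      using vs_delta[OF v1 abc(1) Wv] vs_delta[OF v3 abc(2) Wv] vs_delta[OF v4 abc(3) Wv] by auto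
    then show "delta sx x v \<in> St sx" using abc(4) by (simp add: sx_def)
  next
    fix x assume x: "x \<in> St sx"
    then obtain a b c where abc: "a \<in> St s1" "x = enc3 (a, b, c)"
      by (auto simp: sx_def)
    then show "out sx x \<subseteq> X" using vs_out[OF v1 abc(1)] by (simp add: sx_def)
  qed
  obtain sy where syv: "valid_strat (X \<union> Y) Y sy"
    and lose: "\<not> ex_sat phi (play {1::nat, 2} (\<lambda>i. if i = 1 then sx else sy))"
    using ns sxv unfolding synth_def by blast
  define sy' where "sy' = sy\<lparr>delta := \<lambda>s v. delta sy s (v \<inter> (X \<union> Y))\<rparr>"
  have sy'v: "valid_strat (X \<union> Y \<union> {p, q}) Y sy'"
    using syv unfolding valid_strat_def sy'_def by auto
  define sg4 where "sg4 = sg(2 := sy')"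
  define sg2 where "sg2 = (\<lambda>i::nat. if i = 1 then sx else sy)"
  have f: "sg4 1 = s1" "sg4 (Suc 0) = s1" "sg4 2 = sy'" "sg4 3 = s3" "sg4 4 = s4"
    "sg2 1 = sx" "sg2 (Suc 0) = sx" "sg2 2 = sy"
    by (simp_all add: sg4_def sg2_def s1_def s3_def s4_def)
  have V4: "\<forall>i\<in>G_players. valid_strat (\<Union>(G_ctrl X Y p q ` G_players)) (G_ctrl X Y p q i) (sg4 i)"
    unfolding PhiE using V sy'v by (auto simp: sg4_def G_players_def G_ctrl_def)
  have oo: "out (sg4 i) (states G_players sg4 t i) \<subseteq> G_ctrl X Y p q i" if "i \<in> G_players" for i t
    using out_inv[OF V4 that] .
  have o1: "out s1 (states G_players sg4 t 1) \<subseteq> X" for t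
    using oo[of 1 t] by (simp add: f G_players_def G_ctrl_def)
  have o2: "out sy (states G_players sg4 t 2) \<subseteq> Y" for t
  proof -
    have "out sy' = out sy" by (simp add: sy'_def)
    then show ?thesis using oo[of 2 t] by (simp add: f G_players_def G_ctrl_def)
  qed
  have o3: "out s3 (states G_players sg4 t 3) \<subseteq> {p}" for t
    using oo[of 3 t] by (simp add: f G_players_def G_ctrl_def)
  have o4: "out s4 (states G_players sg4 t 4) \<subseteq> {q}" for t
    using oo[of 4 t] by (simp add: f G_players_def G_ctrl_def)
  have p4: "play G_players sg4 t = out s1 (states G_players sg4 t 1) \<union> out sy (states G_players sg4 t 2)
      \<union> out s3 (states G_players sg4 t 3) \<union> out s4 (states G_players sg4 t 4)" for t
    unfolding play4 by (simp add: f sy'_def)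
  have p4i: "play G_players sg4 t \<inter> (X \<union> Y) = out s1 (states G_players sg4 t 1) \<union> out sy (states G_players sg4 t 2)" for t
    unfolding p4 using o1[of t] o2[of t] o3[of t] o4[of t] pXY qXY by blast
  have claim: "states {1,2} sg2 t 1 = enc3 (states G_players sg4 t 1, states G_players sg4 t 3, states G_players sg4 t 4)
     \<and> states {1,2} sg2 t 2 = states G_players sg4 t 2" for t
  proof (induct t)
    case 0
    then show ?case by (simp add: f sx_def sy'_def)
  next
    case (Suc t)
    have p2: "play {1,2} sg2 t = out s1 (states G_players sg4 t 1) \<union> out sy (states G_players sg4 t 2)"
      using Suc unfolding play2 by (simp add: f sx_def)
    have Weq: "W (states {1,2} sg2 t 1) (play {1,2} sg2 t) = play G_players sg4 t"
      using Suc unfolding p2 p4 W_def by simp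
    show ?case
      using Suc Weq p4i[of t] p2 by (simp add: states_Suc f sx_def sy'_def)
  qed
  have eqp: "play {1,2} sg2 t = play G_players sg4 t \<inter> (X \<union> Y)" for t
    using claim[of t] unfolding p4i play2 by (simp add: f sx_def)
  have eqi: "play {1,2} sg2 t \<inter> (X \<union> Y) = play G_players sg4 t \<inter> (X \<union> Y)" for t
    unfolding eqp by blast
  have "ex_sat phi (play {1,2} sg2) = ex_sat phi (play G_players sg4)"
    by (rule play_sat[OF at eqi])
  then have "\<not> ex_sat phi (play G_players sg4)" using lose unfolding sg2_def by simp
  then have "G_goal phi p q 2 (play G_players (sg(2 := sy')))"
    using nex_all unfolding G_goal_def sg4_def by simp
  then have "G_goal phi p q 2 (play G_players sg)"
    using dev[of 2 sy'] sy'v by (simp add: G_players_def G_ctrl_def)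
  then show False using ex_all[OF exA] by (simp add: G_goal_def)
qed

theorem lemma2:
  fixes X Y :: "'v set" and p q :: 'v and phi :: "'v ldl"
  assumes "finite X" and "finite Y" and "X \<inter> Y = {}"
    and "p \<notin> X \<union> Y" and "q \<notin> X \<union> Y" and "p \<noteq> q"
    and "atoms phi \<subseteq> X \<union> Y"
  shows "synth X Y phi \<longleftrightarrow>
         (\<exists>sg. is_NE G_players (G_ctrl X Y p q) (G_goal phi p q) sg)"
  using fwd[OF assms(4,5)] bwd[OF assms(4-7)] by blast

end
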